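(* Let $\eta_s:\mathcal{V}\to\mathbb{Z}[\mathcal{V}]$ be a solvable update with partition $\mathcal{S}_1,\dots,\mathcal{S}_m$ and matrices $A_{\mathcal{S}_i}$, and let $\vartheta$ be the automorphism of $\mathbb{A}[\mathcal{V}]$ defined blockwise by $\vec{\vartheta}_{\mathcal{S}}=P_{\mathcal{S}}\cdot\vec{x}_{\mathcal{S}}$ for each block $\mathcal{S}$, where $J(A_{\mathcal{S}})=P_{\mathcal{S}}\cdot A_{\mathcal{S}}\cdot P_{\mathcal{S}}^{-1}$ is the Jordan normal form of $A_{\mathcal{S}}$, such that $\eta_t=\vartheta^{-1}\circ\eta_s\circ\vartheta$ is a twn-update. If $\mathrm{cl}^t$ is a closed form of $\eta_t$ with start value $n_0$, then $\mathrm{cl}^s=\vartheta\circ\mathrm{cl}^t\circ\vartheta^{-1}$ is a closed form of $\eta_s$ with start value $n_0$.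
   Context: $\mathcal{V}=\{x_1,\dots,x_d\}$; $\mathbb{A}$ denotes the algebraic numbers. Maps $\mathcal{V}\to\mathbb{A}[\mathcal{V}]$ are applied to expressions by replacing each variable $v$ by its image. Composition convention: $(\eta_2\circ\eta_1)(x)$ is the polynomial $\eta_1(x)$ in which every variable $v$ is replaced by $\eta_2(v)$. Thus $\eta_t(x)$ is $\vartheta(x)$ with each variable $v$ replaced by $\eta_s(v)$ and then each variable $v$ replaced by $\vartheta^{-1}(v)$, and $\mathrm{cl}^s_x$ is $\vartheta^{-1}(x)$ with each variable $v$ replaced by $\mathrm{cl}^t_v$ and then each variable $v$ replaced by $\vartheta(v)$. $\vartheta^{-1}$ is given blockwise by $P_{\mathcal{S}}^{-1}\cdot\vec{x}_{\mathcal{S}}$. Solvable update: $\eta:\mathcal{V}\to\mathbb{Z}[\mathcal{V}]$ is solvable if there is a partition $\mathcal{S}_1,\dots,\mathcal{S}_m$ of $\mathcal{V}$ such that for all $i$, $\vec{\eta}_{\mathcal{S}_i}=A_{\mathcal{S}_i}\cdot\vec{x}_{\mathcal{S}_i}+\vec{p}_{\mathcal{S}_i}$ for some $A_{\mathcal{S}_i}\in\mathbb{Z}^{|\mathcal{S}_i|\times|\mathcal{S}_i|}$ and $\vec{p}_{\mathcal{S}_i}\in\mathbb{Z}[\bigcup_{j<i}\mathcal{S}_j]^{|\mathcal{S}_i|}$, where $\vec{\eta}_{\mathcal{S}_i}$ is the vector of $\eta(x_j)$ and $\vec{x}_{\mathcal{S}_i}$ the vector of $x_j$ for $x_j\in\mathcal{S}_i$.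 Twn-update: $\eta:\mathcal{V}\to\mathbb{A}[\mathcal{V}]$ with $\eta(x_i)=c_i\cdot x_i+p_i$ for some $c_i\in\mathbb{A}$ and $p_i\in\mathbb{A}[x_1,\dots,x_{i-1}]$, for all $1\le i\le d$. Closed form of an update $\eta$ with start value $n_0$: a tuple $(\mathrm{cl}_{x_1},\dots,\mathrm{cl}_{x_d})$ of expressions $\sum_{j=1}^{\ell}\alpha_j n^{a_j}b_j^n$ ($\ell,a_j\in\mathbb{N}$, $b_j\in\mathbb{A}$, $\alpha_j\in\mathbb{A}[\mathcal{V}]$) such that for all $\sigma:\mathcal{V}\cup\{n\}\to\mathbb{Z}$ with $\sigma(n)\ge n_0$ and all $i$, $\sigma(\mathrm{cl}_{x_i})=\sigma(\eta^n(x_i))$, where $\eta^n$ is the $n$-fold application of $\eta$ and $\sigma(e)$ substitutes $\sigma(v)$ for each variable $v$. *)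

theory Defs
  imports "Jordan_Normal_Form.Jordan_Normal_Form" "HOL-Computational_Algebra.Polynomial"
begin

text \<open>Variables x_1,...,x_d are represented by the indices 0,...,d-1.
  Polynomials over the algebraic numbers (subset of the complex numbers) are
  represented by a deep embedding of polynomial expressions; two expressions denote
  the same polynomial iff they evaluate equally everywhere (complex field is infinite).\<close>

datatype pexpr = Var nat | Const complex | Add pexpr pexpr | Mul pexpr pexpr

fun peval :: "(nat \<Rightarrow> complex) \<Rightarrow> pexpr \<Rightarrow> complex" where
  "peval \<sigma> (Var v) = \<sigma> v"
| "peval \<sigma> (Const c) = c"
| "peval \<sigma> (Add p q) = peval \<sigma> p + peval \<sigma> q"
| "peval \<sigma> (Mul p q) = peval \<sigma> p * peval \<sigma> q"

fun psubst :: "(nat \<Rightarrow> pexpr) \<Rightarrow> pexpr \<Rightarrow> pexpr" where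
  "psubst \<eta> (Var v) = \<eta> v"
| "psubst \<eta> (Const c) = Const c"
| "psubst \<eta> (Add p q) = Add (psubst \<eta> p) (psubst \<eta> q)"
| "psubst \<eta> (Mul p q) = Mul (psubst \<eta> p) (psubst \<eta> q)"

fun pvars :: "pexpr \<Rightarrow> nat set" where
  "pvars (Var v) = {v}"
| "pvars (Const c) = {}"
| "pvars (Add p q) = pvars p \<union> pvars q"
| "pvars (Mul p q) = pvars p \<union> pvars q"

fun pconsts :: "pexpr \<Rightarrow> complex set" where
  "pconsts (Var v) = {}"
| "pconsts (Const c) = {c}"
| "pconsts (Add p q) = pconsts p \<union> pconsts q"
| "pconsts (Mul p q) = pconsts p \<union> pconsts q"

definition poly_eq :: "pexpr \<Rightarrow> pexpr \<Rightarrow> bool" where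
  "poly_eq p q \<longleftrightarrow> (\<forall>\<sigma>. peval \<sigma> p = peval \<sigma> q)"

definition in_poly_ring :: "complex set \<Rightarrow> nat set \<Rightarrow> pexpr \<Rightarrow> bool" where
  "in_poly_ring K W p \<longleftrightarrow> (\<exists>q. pconsts q \<subseteq> K \<and> pvars q \<subseteq> W \<and> poly_eq p q)"

definition alg_nums :: "complex set" where
  "alg_nums = {z. algebraic z}"

fun upd_pow :: "(nat \<Rightarrow> pexpr) \<Rightarrow> nat \<Rightarrow> nat \<Rightarrow> pexpr" where
  "upd_pow \<eta> 0 = Var"
| "upd_pow \<eta> (Suc n) = (\<lambda>x. psubst \<eta> (upd_pow \<eta> n x))"

definition lin_expr :: "complex list \<Rightarrow> nat list \<Rightarrow> pexpr" where
  "lin_expr cs vs = foldr (\<lambda>(c,v) e. Add (Mul (Const c) (Var v)) e) (zip cs vs) (Const 0)"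

definition mat_row_list :: "complex mat \<Rightarrow> nat \<Rightarrow> complex list" where
  "mat_row_list M r = map (\<lambda>c. M $$ (r,c)) [0..<dim_col M]"

text \<open>Solvable update on variables {0..<d} with partition Ss (blocks as ordered lists,
  S_1 first) and integer matrices As.\<close>
definition solvable_with :: "nat \<Rightarrow> (nat \<Rightarrow> pexpr) \<Rightarrow> nat list list \<Rightarrow> int mat list \<Rightarrow> bool" where
  "solvable_with d \<eta> Ss As \<longleftrightarrow>
     distinct (concat Ss) \<and> set (concat Ss) = {0..<d} \<and> [] \<notin> set Ss \<and>
     length As = length Ss \<and>
     (\<forall>i < length Ss.
        As ! i \<in> carrier_mat (length (Ss ! i)) (length (Ss ! i)) \<and>
        (\<forall>r < length (Ss ! i). \<exists>p.
            in_poly_ring \<int> (\<Union>j<i. set (Ss ! j)) p \<and>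
            poly_eq (\<eta> (Ss ! i ! r))
              (Add (lin_expr (mat_row_list (map_mat of_int (As ! i)) r) (Ss ! i)) p)))"

definition twn_update :: "nat \<Rightarrow> (nat \<Rightarrow> pexpr) \<Rightarrow> bool" where
  "twn_update d \<eta> \<longleftrightarrow>
     (\<forall>i<d. \<exists>c p. algebraic c \<and> in_poly_ring alg_nums {0..<i} p \<and>
                   poly_eq (\<eta> i) (Add (Mul (Const c) (Var i)) p))"

text \<open>Closed-form expressions: lists of terms (alpha, a, b) meaning alpha * n^a * b^n.\<close>
type_synonym cform = "(pexpr \<times> nat \<times> complex) list"

definition cf_eval :: "(nat \<Rightarrow> complex) \<Rightarrow> nat \<Rightarrow> cform \<Rightarrow> complex" where
  "cf_eval \<sigma> n cf = (\<Sum>(\<alpha>,a,b)\<leftarrow>cf. peval \<sigma> \<alpha> * of_nat n ^ a * b ^ n)"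

definition is_closed_form :: "nat \<Rightarrow> (nat \<Rightarrow> pexpr) \<Rightarrow> nat \<Rightarrow> (nat \<Rightarrow> cform) \<Rightarrow> bool" where
  "is_closed_form d \<eta> n0 cl \<longleftrightarrow>
     (\<forall>i<d. (\<forall>(\<alpha>,a,b)\<in>set (cl i). in_poly_ring alg_nums {0..<d} \<alpha> \<and> algebraic b) \<and>
            (\<forall>\<sigma> :: nat \<Rightarrow> int. \<forall>n \<ge> n0.
               cf_eval (of_int \<circ> \<sigma>) n (cl i) = peval (of_int \<circ> \<sigma>) (upd_pow \<eta> n i)))"

fun cf_of :: "(nat \<Rightarrow> cform) \<Rightarrow> pexpr \<Rightarrow> cform" where
  "cf_of cl (Var v) = cl v"
| "cf_of cl (Const c) = [(Const c, 0, 1)]"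
| "cf_of cl (Add p q) = cf_of cl p @ cf_of cl q"
| "cf_of cl (Mul p q) =
     concat (map (\<lambda>(\<alpha>,a,b). map (\<lambda>(\<beta>,a',b'). (Mul \<alpha> \<beta>, a + a', b * b')) (cf_of cl q)) (cf_of cl p))"

definition cf_subst :: "(nat \<Rightarrow> pexpr) \<Rightarrow> cform \<Rightarrow> cform" where
  "cf_subst \<theta> cf = map (\<lambda>(\<alpha>,a,b). (psubst \<theta> \<alpha>, a, b)) cf"

end

theory Submission
  imports Defs
begin

definition Fv :: "(nat \<Rightarrow> pexpr) \<Rightarrow> (nat \<Rightarrow> complex) \<Rightarrow> (nat \<Rightarrow> complex)" where
  "Fv \<eta> \<sigma> = (\<lambda>v. peval \<sigma> (\<eta> v))"

lemma peval_psubst: "peval \<sigma> (psubst \<eta> p) = peval (Fv \<eta> \<sigma>) p"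
  by (induction p) (auto simp: Fv_def)

lemma peval_cong: "(\<And>v. v \<in> pvars p \<Longrightarrow> \<sigma> v = \<sigma>' v) \<Longrightarrow> peval \<sigma> p = peval \<sigma>' p"
  by (induction p) auto

lemma upd_pow_eval: "peval \<sigma> (upd_pow \<eta> n x) = ((Fv \<eta>) ^^ n) \<sigma> x"
proof (induction n arbitrary: \<sigma>)
  case 0 then show ?case by simp
next
  case (Suc n)
  have "peval \<sigma> (upd_pow \<eta> (Suc n) x) = peval (Fv \<eta> \<sigma>) (upd_pow \<eta> n x)"
    by (simp add: peval_psubst)
  also have "\<dots> = ((Fv \<eta>) ^^ n) (Fv \<eta> \<sigma>) x" by (rule Suc.IH)
  also have "\<dots> = ((Fv \<eta>) ^^ Suc n) \<sigma> x" by (simp add: funpow_Suc_right del: funpow.simps)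
  finally show ?case .
qed

lemma cf_eval_Nil[simp]: "cf_eval \<sigma> n [] = 0" by (simp add: cf_eval_def)
lemma cf_eval_Cons[simp]: "cf_eval \<sigma> n ((\<alpha>,a,b) # cf) = peval \<sigma> \<alpha> * of_nat n ^ a * b ^ n + cf_eval \<sigma> n cf"
  by (simp add: cf_eval_def)
lemma cf_eval_append[simp]: "cf_eval \<sigma> n (xs @ ys) = cf_eval \<sigma> n xs + cf_eval \<sigma> n ys"
  by (simp add: cf_eval_def)

lemma cf_eval_map_mul:
  "cf_eval \<sigma> n (map (\<lambda>(\<beta>,a',b'). (Mul \<alpha> \<beta>, a + a', b * b')) Q)
     = (peval \<sigma> \<alpha> * of_nat n ^ a * b ^ n) * cf_eval \<sigma> n Q"
  by (induction Q) (auto simp: power_add power_mult_distrib algebra_simps)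

lemma cf_eval_concat_mul:
  "cf_eval \<sigma> n (concat (map (\<lambda>(\<alpha>,a,b). map (\<lambda>(\<beta>,a',b'). (Mul \<alpha> \<beta>, a + a', b * b')) Q) P))
     = cf_eval \<sigma> n P * cf_eval \<sigma> n Q"
  by (induction P) (auto simp: cf_eval_map_mul algebra_simps)

lemma cf_eval_cf_of: "cf_eval \<tau> n (cf_of cl p) = peval (\<lambda>v. cf_eval \<tau> n (cl v)) p"
  by (induction p) (auto simp: cf_eval_concat_mul)

lemma cf_eval_subst: "cf_eval \<sigma> n (cf_subst \<theta> cf) = cf_eval (Fv \<theta> \<sigma>) n cf"
  by (induction cf) (auto simp: cf_subst_def peval_psubst)

definition cfexpr :: "nat \<Rightarrow> cform \<Rightarrow> pexpr" where
  "cfexpr n cf = foldr (\<lambda>(\<alpha>,a,b) e. Add (Mul \<alpha> (Const (of_nat n ^ a * b ^ n))) e) cf (Const 0)"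

lemma peval_cfexpr: "peval \<sigma> (cfexpr n cf) = cf_eval \<sigma> n cf"
  by (induction cf) (auto simp: cfexpr_def algebra_simps)

lemma poly_of_var: "\<exists>q. \<forall>t. peval (\<sigma>(w:=t)) p = poly q t"
proof (induction p)
  case (Var v)
  show ?case
  proof (cases "v = w")
    case True then show ?thesis by (rule_tac x="[:0,1:]" in exI) simp
  next
    case False then show ?thesis by (rule_tac x="[:\<sigma> v:]" in exI) simp
  qed
next
  case (Const c) then show ?case by (rule_tac x="[:c:]" in exI) simp
next
  case (Add p1 p2)
  then obtain q1 q2 where "\<forall>t. peval (\<sigma>(w:=t)) p1 = poly q1 t" "\<forall>t. peval (\<sigma>(w:=t)) p2 = poly q2 t" by blast
  then show ?case by (intro exI[of _ "q1+q2"] allI) (simp only: peval.simps poly_add)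
next
  case (Mul p1 p2)
  then obtain q1 q2 where "\<forall>t. peval (\<sigma>(w:=t)) p1 = poly q1 t" "\<forall>t. peval (\<sigma>(w:=t)) p2 = poly q2 t" by blast
  then show ?case by (intro exI[of _ "q1*q2"] allI) (simp only: peval.simps poly_mult)
qed

lemma dense_aux:
  assumes Z: "\<And>s::nat \<Rightarrow> int. peval (of_int \<circ> s) p = 0"
    and W: "finite W"
  shows "\<forall>\<sigma>. (\<forall>v. v \<notin> W \<longrightarrow> \<sigma> v \<in> \<int>) \<longrightarrow> peval \<sigma> p = 0"
  using W
proof (induction W rule: finite_induct)
  case empty
  show ?case
  proof (intro allI impI)
    fix \<sigma> :: "nat \<Rightarrow> complex" assume h: "\<forall>v. v \<notin> {} \<longrightarrow> \<sigma> v \<in> \<int>"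
    define s where "s = (\<lambda>v. SOME k::int. \<sigma> v = of_int k)"
    have "\<sigma> = of_int \<circ> s"
    proof
      fix v
      from h have "\<sigma> v \<in> \<int>" by simp
      then have "\<exists>k::int. \<sigma> v = of_int k" by (auto elim: Ints_cases)
      then show "\<sigma> v = (of_int \<circ> s) v" unfolding s_def comp_def by (rule someI_ex)
    qed
    then show "peval \<sigma> p = 0" using Z by simp
  qed
next
  case (insert w W)
  show ?case
  proof (intro allI impI)
    fix \<sigma> :: "nat \<Rightarrow> complex" assume h: "\<forall>v. v \<notin> insert w W \<longrightarrow> \<sigma> v \<in> \<int>"
    obtain q where q: "\<forall>t. peval (\<sigma>(w:=t)) p = poly q t" using poly_of_var by blast
    have "q = 0"
    proof (rule ccontr)
      assume "q \<noteq> 0"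
      then have fin: "finite {x. poly q x = 0}" by (rule poly_roots_finite)
      have "\<int> \<subseteq> {x. poly q x = 0}"
      proof
        fix t :: complex assume "t \<in> \<int>"
        then have "\<forall>v. v \<notin> W \<longrightarrow> (\<sigma>(w:=t)) v \<in> \<int>" using h by auto
        then have "peval (\<sigma>(w:=t)) p = 0" using insert.IH by blast
        then show "t \<in> {x. poly q x = 0}" using q by simp
      qed
      moreover have "infinite (\<int> :: complex set)"
      proof -
        have "inj (of_int :: int \<Rightarrow> complex)" by (simp add: inj_def)
        then have "infinite (range (of_int :: int \<Rightarrow> complex))"
          using finite_imageD infinite_UNIV_int by blast
        then show ?thesis by (simp add: Ints_def)
      qed
      ultimately show False using fin finite_subset by blast
    qed
    moreover have "peval (\<sigma>(w:=\<sigma> w)) p = poly q (\<sigma> w)" using q by blast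
    ultimately show "peval \<sigma> p = 0" by (simp only: fun_upd_triv poly_0)
  qed
qed

lemma finite_pvars: "finite (pvars p)" by (induction p) auto

lemma dense:
  assumes Z: "\<And>s::nat \<Rightarrow> int. peval (of_int \<circ> s) p = 0"
  shows "peval \<sigma> p = 0"
proof -
  define \<sigma>' where "\<sigma>' = (\<lambda>v. if v \<in> pvars p then \<sigma> v else 0)"
  have "peval \<sigma>' p = 0" using dense_aux[OF Z finite_pvars[of p]] unfolding \<sigma>'_def by auto
  moreover have "peval \<sigma>' p = peval \<sigma> p" by (rule peval_cong) (simp add: \<sigma>'_def)
  ultimately show ?thesis by simp
qed

lemma dense_eq:
  assumes "\<And>s::nat \<Rightarrow> int. cf_eval (of_int \<circ> s) n cf = peval (of_int \<circ> s) e"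
  shows "cf_eval \<sigma> n cf = peval \<sigma> e"
proof -
  let ?p = "Add (cfexpr n cf) (Mul (Const (-1)) e)"
  have "peval \<sigma> ?p = 0" by (rule dense) (simp add: peval_cfexpr assms)
  then show ?thesis by (simp add: peval_cfexpr)
qed

lemma lin_expr_Cons: "lin_expr (c # cs) (v # vs) = Add (Mul (Const c) (Var v)) (lin_expr cs vs)"
  by (simp add: lin_expr_def)

lemma peval_lin_expr: "length cs = length vs \<Longrightarrow>
   peval \<sigma> (lin_expr cs vs) = (\<Sum>i<length vs. cs ! i * \<sigma> (vs ! i))"
proof (induction cs vs rule: list_induct2)
  case Nil then show ?case by (simp add: lin_expr_def)
next
  case (Cons c cs v vs) then show ?case by (simp add: lin_expr_Cons sum.lessThan_Suc_shift del: sum.lessThan_Suc)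
qed

lemma pvars_lin_expr: "pvars (lin_expr cs vs) \<subseteq> set vs"
  unfolding lin_expr_def by (induction cs vs rule: list_induct2') (auto simp: lin_expr_def)

lemma pconsts_lin_expr: "pconsts (lin_expr cs vs) \<subseteq> insert 0 (set cs)"
  unfolding lin_expr_def by (induction cs vs rule: list_induct2') auto

lemma cf_of_lin_expr_mem:
  "x \<in> set (cf_of cl (lin_expr cs vs)) \<Longrightarrow> x = (Const 0, 0, 1) \<or>
     (\<exists>c v \<beta> a b. c \<in> set cs \<and> v \<in> set vs \<and> (\<beta>,a,b) \<in> set (cl v) \<and> x = (Mul (Const c) \<beta>, a, b))"
proof (induction cs vs rule: list_induct2')
  case 1 then show ?case by (simp add: lin_expr_def)
next
  case (2 x xs) then show ?case by (simp add: lin_expr_def)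
next
  case (3 y ys) then show ?case by (simp add: lin_expr_def)
next
  case (4 c cs v vs)
  have "x \<in> set (map (\<lambda>(\<beta>,a',b'). (Mul (Const c) \<beta>, 0 + a', 1 * b')) (cl v)) \<or>
        x \<in> set (cf_of cl (lin_expr cs vs))"
    using 4(2) by (simp add: lin_expr_Cons)
  then show ?case
  proof
    assume "x \<in> set (map (\<lambda>(\<beta>,a',b'). (Mul (Const c) \<beta>, 0 + a', 1 * b')) (cl v))"
    then obtain \<beta> a b where "(\<beta>,a,b) \<in> set (cl v)" "x = (Mul (Const c) \<beta>, a, b)" by auto
    then show ?thesis by auto
  next
    assume "x \<in> set (cf_of cl (lin_expr cs vs))"
    from 4(1)[OF this] show ?thesis by fastforce
  qed
qed

lemma pvars_psubst: "pvars (psubst \<theta> q) = (\<Union>v\<in>pvars q. pvars (\<theta> v))"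
  by (induction q) auto

lemma pconsts_psubst: "pconsts (psubst \<theta> q) = pconsts q \<union> (\<Union>v\<in>pvars q. pconsts (\<theta> v))"
  by (induction q) auto

lemma in_poly_ring_psubst:
  assumes "in_poly_ring K W \<alpha>" "\<And>v. v \<in> W \<Longrightarrow> pconsts (\<theta> v) \<subseteq> K \<and> pvars (\<theta> v) \<subseteq> W"
  shows "in_poly_ring K W (psubst \<theta> \<alpha>)"
proof -
  obtain q where q: "pconsts q \<subseteq> K" "pvars q \<subseteq> W" "poly_eq \<alpha> q"
    using assms(1) unfolding in_poly_ring_def by blast
  show ?thesis unfolding in_poly_ring_def
  proof (intro exI conjI)
    show "pconsts (psubst \<theta> q) \<subseteq> K" using q assms(2) by (auto simp: pconsts_psubst)
    show "pvars (psubst \<theta> q) \<subseteq> W" using q assms(2) by (fastforce simp: pvars_psubst)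
    show "poly_eq (psubst \<theta> \<alpha>) (psubst \<theta> q)" using q(3) by (simp add: poly_eq_def peval_psubst)
  qed
qed


lemma Fv_resp:
  assumes "\<forall>v<d. \<exists>e. (\<forall>\<sigma>. peval \<sigma> (\<eta> v) = peval \<sigma> e) \<and> pvars e \<subseteq> {0..<d}"
    and "\<forall>v<d. \<sigma> v = \<sigma>' v"
  shows "\<forall>v<d. Fv \<eta> \<sigma> v = Fv \<eta> \<sigma>' v"
proof (intro allI impI)
  fix v assume "v < d"
  then obtain e where e: "\<forall>\<sigma>. peval \<sigma> (\<eta> v) = peval \<sigma> e" "pvars e \<subseteq> {0..<d}" using assms(1) by blast
  have "peval \<sigma> e = peval \<sigma>' e" by (rule peval_cong) (use e(2) assms(2) in auto)
  then show "Fv \<eta> \<sigma> v = Fv \<eta> \<sigma>' v" using e(1) by (simp add: Fv_def)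
qed

lemma peval_row: "dim_col M = length vs \<Longrightarrow>
  peval \<sigma> (lin_expr (mat_row_list M r) vs) = (\<Sum>c<length vs. M $$ (r,c) * \<sigma> (vs ! c))"
  by (subst peval_lin_expr) (auto simp: mat_row_list_def intro!: sum.cong)

lemma in_poly_ring_Mul_Const: "c \<in> K \<Longrightarrow> in_poly_ring K W \<beta> \<Longrightarrow> in_poly_ring K W (Mul (Const c) \<beta>)"
  unfolding in_poly_ring_def poly_eq_def
  by (elim exE conjE, rule_tac x="Mul (Const c) q" in exI) auto

theorem theorem16:
  fixes d n0 :: nat
    and eta_s :: "nat \<Rightarrow> pexpr"
    and Ss :: "nat list list" and As :: "int mat list"
    and Ps Pinvs :: "complex mat list"
    and theta theta_inv :: "nat \<Rightarrow> pexpr"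
    and cl_t :: "nat \<Rightarrow> cform"
  assumes solv: "solvable_with d eta_s Ss As"
    and lenP: "length Ps = length Ss" "length Pinvs = length Ss"
    and P_carrier: "\<forall>i < length Ss. Ps ! i \<in> carrier_mat (length (Ss ! i)) (length (Ss ! i))
                                    \<and> Pinvs ! i \<in> carrier_mat (length (Ss ! i)) (length (Ss ! i))"
    and P_inv: "\<forall>i < length Ss. Ps ! i * Pinvs ! i = 1\<^sub>m (length (Ss ! i))
                               \<and> Pinvs ! i * Ps ! i = 1\<^sub>m (length (Ss ! i))"
    and P_alg: "\<forall>i < length Ss. \<forall>r < length (Ss ! i). \<forall>c < length (Ss ! i).
                  algebraic (Ps ! i $$ (r,c)) \<and> algebraic (Pinvs ! i $$ (r,c))"
    and jordan: "\<forall>i < length Ss. \<exists>n_as. 0 \<notin> fst ` set n_as \<and>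
                  Ps ! i * map_mat of_int (As ! i) * Pinvs ! i = jordan_matrix n_as"
    and theta_def: "\<forall>i < length Ss. \<forall>r < length (Ss ! i).
                  theta (Ss ! i ! r) = lin_expr (mat_row_list (Ps ! i) r) (Ss ! i)"
    and theta_inv_def: "\<forall>i < length Ss. \<forall>r < length (Ss ! i).
                  theta_inv (Ss ! i ! r) = lin_expr (mat_row_list (Pinvs ! i) r) (Ss ! i)"
    and twn: "twn_update d (\<lambda>x. psubst theta_inv (psubst eta_s (theta x)))"
    and cl_t: "is_closed_form d (\<lambda>x. psubst theta_inv (psubst eta_s (theta x))) n0 cl_t"
  shows "is_closed_form d eta_s n0 (\<lambda>x. cf_subst theta (cf_of cl_t (theta_inv x)))"
proof -
  define eta_t where "eta_t = (\<lambda>x. psubst theta_inv (psubst eta_s (theta x)))"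
  have setc: "set (concat Ss) = {0..<d}" using solv unfolding solvable_with_def by blast
  have blk: "\<exists>k r. k < length Ss \<and> r < length (Ss ! k) \<and> v = Ss ! k ! r" if "v < d" for v
  proof -
    from that setc have "v \<in> set (concat Ss)" by auto
    then obtain xs where "xs \<in> set Ss" "v \<in> set xs" by auto
    then obtain k r where "k < length Ss" "xs = Ss ! k" "r < length xs" "v = xs ! r"
      by (metis in_set_conv_nth)
    then show ?thesis by blast
  qed
  have inblk: "set (Ss ! k) \<subseteq> {0..<d}" if "k < length Ss" for k
    using that setc by (auto simp: set_concat)
  have inblk': "Ss ! k ! r < d" if "k < length Ss" "r < length (Ss ! k)" for k r
    using inblk[OF that(1)] that(2) nth_mem by fastforce
  have dimP: "dim_col (Ps ! k) = length (Ss ! k)" "dim_col (Pinvs ! k) = length (Ss ! k)"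
    "dim_row (Ps ! k) = length (Ss ! k)" "dim_row (Pinvs ! k) = length (Ss ! k)"
    if "k < length Ss" for k
    using P_carrier that by auto
  have thloc: "pvars (theta v) \<subseteq> {0..<d} \<and> pconsts (theta v) \<subseteq> alg_nums" if "v < d" for v
  proof -
    obtain k r where kr: "k < length Ss" "r < length (Ss ! k)" "v = Ss ! k ! r" using blk[OF \<open>v < d\<close>] by blast
    have th: "theta v = lin_expr (mat_row_list (Ps ! k) r) (Ss ! k)" using theta_def kr by blast
    have "pconsts (theta v) \<subseteq> alg_nums"
    proof
      fix c assume "c \<in> pconsts (theta v)"
      then have "c \<in> insert 0 (set (mat_row_list (Ps ! k) r))" using pconsts_lin_expr[of "mat_row_list (Ps ! k) r" "Ss ! k"] th by auto
      then show "c \<in> alg_nums" using P_alg kr dimP[OF kr(1)]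
        by (auto simp: alg_nums_def mat_row_list_def)
    qed
    moreover have "pvars (theta v) \<subseteq> {0..<d}" using pvars_lin_expr[of _ "Ss ! k"] th inblk[OF kr(1)] by auto
    ultimately show ?thesis by blast
  qed
  have tiloc: "pvars (theta_inv v) \<subseteq> {0..<d}" if "v < d" for v
  proof -
    obtain k r where kr: "k < length Ss" "r < length (Ss ! k)" "v = Ss ! k ! r" using blk[OF \<open>v < d\<close>] by blast
    have th: "theta_inv v = lin_expr (mat_row_list (Pinvs ! k) r) (Ss ! k)" using theta_inv_def kr by blast
    show ?thesis using pvars_lin_expr[of _ "Ss ! k"] th inblk[OF kr(1)] by auto
  qed
  have locTh: "\<forall>v<d. \<exists>e. (\<forall>\<sigma>. peval \<sigma> (theta v) = peval \<sigma> e) \<and> pvars e \<subseteq> {0..<d}"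
    using thloc by blast
  have locTi: "\<forall>v<d. \<exists>e. (\<forall>\<sigma>. peval \<sigma> (theta_inv v) = peval \<sigma> e) \<and> pvars e \<subseteq> {0..<d}"
    using tiloc by blast
  have locE: "\<forall>v<d. \<exists>e. (\<forall>\<sigma>. peval \<sigma> (eta_s v) = peval \<sigma> e) \<and> pvars e \<subseteq> {0..<d}"
  proof (intro allI impI)
    fix v assume "v < d"
    obtain k r where kr: "k < length Ss" "r < length (Ss ! k)" "v = Ss ! k ! r" using blk[OF \<open>v < d\<close>] by blast
    obtain p where p: "in_poly_ring \<int> (\<Union>j<k. set (Ss ! j)) p"
      "poly_eq (eta_s (Ss ! k ! r)) (Add (lin_expr (mat_row_list (map_mat of_int (As ! k)) r) (Ss ! k)) p)"
      using solv kr unfolding solvable_with_def by blast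
    obtain q where q: "pvars q \<subseteq> (\<Union>j<k. set (Ss ! j))" "poly_eq p q"
      using p(1) unfolding in_poly_ring_def by blast
    let ?e = "Add (lin_expr (mat_row_list (map_mat of_int (As ! k)) r) (Ss ! k)) q"
    have "\<forall>\<sigma>. peval \<sigma> (eta_s v) = peval \<sigma> ?e" using p(2) q(2) kr(3) by (simp add: poly_eq_def)
    moreover have "pvars ?e \<subseteq> {0..<d}"
    proof -
      have "(\<Union>j<k. set (Ss ! j)) \<subseteq> {0..<d}"
      proof (intro UN_least)
        fix j assume "j \<in> {..<k}"
        then show "set (Ss ! j) \<subseteq> {0..<d}" using inblk kr(1) by simp
      qed
      moreover have "pvars (lin_expr (mat_row_list (map_mat of_int (As ! k)) r) (Ss ! k)) \<subseteq> {0..<d}"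
        using pvars_lin_expr[of "mat_row_list (map_mat of_int (As ! k)) r" "Ss ! k"] inblk[OF kr(1)] by blast
      ultimately show ?thesis using q(1) by auto
    qed
    ultimately show "\<exists>e. (\<forall>\<sigma>. peval \<sigma> (eta_s v) = peval \<sigma> e) \<and> pvars e \<subseteq> {0..<d}" by blast
  qed
  define T where "T = Fv eta_t"
  define E where "E = Fv eta_s"
  define Th where "Th = Fv theta"
  define Ti where "Ti = Fv theta_inv"
  have Tcomp: "T \<tau> = Th (E (Ti \<tau>))" for \<tau>
    unfolding T_def E_def Th_def Ti_def eta_t_def
    by (rule ext) (simp add: peval_psubst Fv_def[of "\<lambda>x. psubst theta_inv (psubst eta_s (theta x))"] Fv_def[of theta])
  have respT: "\<forall>v<d. T \<sigma> v = T \<sigma>' v" if "\<forall>v<d. \<sigma> v = \<sigma>' v" for \<sigma> \<sigma>'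
    unfolding Tcomp Th_def E_def Ti_def
    by (intro Fv_resp[OF locTh] Fv_resp[OF locE] Fv_resp[OF locTi] that)
  have inv: "Ti (Th \<sigma>) v = \<sigma> v" if "v < d" for \<sigma> v
  proof -
    obtain k r where kr: "k < length Ss" "r < length (Ss ! k)" "v = Ss ! k ! r" using blk[OF \<open>v < d\<close>] by blast
    define L where "L = length (Ss ! k)"
    define S where "S = Ss ! k"
    define P where "P = Ps ! k"
    define Q where "Q = Pinvs ! k"
    have S1: "Th \<sigma> (S ! c) = (\<Sum>j<L. P $$ (c,j) * \<sigma> (S ! j))" if "c < L" for c
      using theta_def kr that dimP[OF kr(1)]
      by (simp add: Th_def Fv_def S_def L_def P_def peval_row)
    have "Ti (Th \<sigma>) v = (\<Sum>c<L. Q $$ (r,c) * Th \<sigma> (S ! c))"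
      using theta_inv_def kr dimP[OF kr(1)]
      by (simp add: Ti_def Fv_def S_def L_def Q_def peval_row)
    also have "\<dots> = (\<Sum>c<L. Q $$ (r,c) * (\<Sum>j<L. P $$ (c,j) * \<sigma> (S ! j)))"
      by (rule sum.cong) (simp_all add: S1)
    also have "\<dots> = (\<Sum>j<L. (\<Sum>c<L. Q $$ (r,c) * P $$ (c,j)) * \<sigma> (S ! j))"
      by (simp add: sum_distrib_left sum_distrib_right mult.assoc) (rule sum.swap)
    also have "\<dots> = (\<Sum>j<L. (Q * P) $$ (r,j) * \<sigma> (S ! j))"
    proof (rule sum.cong[OF refl])
      fix j assume "j \<in> {..<L}"
      then have "(Q * P) $$ (r,j) = (\<Sum>c<L. Q $$ (r,c) * P $$ (c,j))"
        using kr dimP[OF kr(1)] by (simp add: Q_def P_def L_def scalar_prod_def lessThan_atLeast0)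
      then show "(\<Sum>c<L. Q $$ (r,c) * P $$ (c,j)) * \<sigma> (S ! j) = (Q * P) $$ (r,j) * \<sigma> (S ! j)" by simp
    qed
    also have "\<dots> = (\<Sum>j<L. (if r = j then 1 else 0) * \<sigma> (S ! j))"
      using P_inv kr by (intro sum.cong refl) (simp add: Q_def P_def L_def)
    also have "\<dots> = (\<Sum>j<L. if j = r then \<sigma> (S ! j) else 0)"
      by (rule sum.cong) auto
    also have "\<dots> = \<sigma> v" using kr by (simp add: S_def L_def)
    finally show ?thesis .
  qed
  have ind: "\<forall>v<d. (T ^^ n) (Th \<sigma>) v = Th ((E ^^ n) \<sigma>) v" for n \<sigma>
  proof (induction n)
    case 0 then show ?case by simp
  next
    case (Suc n)
    have a: "\<forall>v<d. T ((T ^^ n) (Th \<sigma>)) v = T (Th ((E ^^ n) \<sigma>)) v" by (rule respT[OF Suc.IH])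
    have b: "\<forall>v<d. Ti (Th ((E ^^ n) \<sigma>)) v = (E ^^ n) \<sigma> v" using inv by blast
    have c: "\<forall>v<d. T (Th ((E ^^ n) \<sigma>)) v = Th (E ((E ^^ n) \<sigma>)) v"
    proof -
      have "\<forall>v<d. E (Ti (Th ((E ^^ n) \<sigma>))) v = E ((E ^^ n) \<sigma>) v"
        using Fv_resp[OF locE b] by (simp add: E_def)
      then have "\<forall>v<d. Th (E (Ti (Th ((E ^^ n) \<sigma>)))) v = Th (E ((E ^^ n) \<sigma>)) v"
        using Fv_resp[OF locTh] by (simp add: Th_def)
      then show ?thesis by (simp add: Tcomp)
    qed
    show ?case using a c by simp
  qed
  have clt1: "\<forall>(\<alpha>,a,b)\<in>set (cl_t i). in_poly_ring alg_nums {0..<d} \<alpha> \<and> algebraic b" if "i < d" for i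
    using cl_t that unfolding is_closed_form_def by blast
  have clt2: "cf_eval \<tau> n (cl_t v) = peval \<tau> (upd_pow eta_t n v)" if "v < d" "n \<ge> n0" for \<tau> n v
    by (rule dense_eq) (use cl_t that in \<open>auto simp: is_closed_form_def eta_t_def\<close>)
  show ?thesis
    unfolding is_closed_form_def
  proof (intro allI impI conjI ballI)
    fix i x assume i: "i < d" and x: "x \<in> set (cf_subst theta (cf_of cl_t (theta_inv i)))"
    obtain k r where kr: "k < length Ss" "r < length (Ss ! k)" "i = Ss ! k ! r" using blk[OF i] by blast
    have thi: "theta_inv i = lin_expr (mat_row_list (Pinvs ! k) r) (Ss ! k)" using theta_inv_def kr by blast
    obtain \<alpha>0 a b where x0: "(\<alpha>0,a,b) \<in> set (cf_of cl_t (theta_inv i))" "x = (psubst theta \<alpha>0, a, b)"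
      using x by (auto simp: cf_subst_def)
    have "in_poly_ring alg_nums {0..<d} \<alpha>0 \<and> algebraic b"
      using cf_of_lin_expr_mem[OF x0(1)[unfolded thi]]
    proof
      assume "(\<alpha>0, a, b) = (Const 0, 0, 1)"
      then show ?thesis unfolding in_poly_ring_def
        by (auto intro!: exI[of _ "Const 0"] simp: alg_nums_def poly_eq_def)
    next
      assume "\<exists>c v \<beta> a' b'. c \<in> set (mat_row_list (Pinvs ! k) r) \<and> v \<in> set (Ss ! k) \<and>
        (\<beta>, a', b') \<in> set (cl_t v) \<and> (\<alpha>0, a, b) = (Mul (Const c) \<beta>, a', b')"
      then obtain c v \<beta> where h: "c \<in> set (mat_row_list (Pinvs ! k) r)" "v \<in> set (Ss ! k)"
        "(\<beta>, a, b) \<in> set (cl_t v)" "\<alpha>0 = Mul (Const c) \<beta>" by auto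
      have "v < d" using h(2) inblk[OF kr(1)] by auto
      then have hb: "in_poly_ring alg_nums {0..<d} \<beta> \<and> algebraic b" using clt1 h(3) by fastforce
      have "c \<in> alg_nums" using h(1) P_alg kr dimP[OF kr(1)]
        by (auto simp: alg_nums_def mat_row_list_def)
      then show ?thesis using hb h(4) in_poly_ring_Mul_Const by blast
    qed
    then show "case x of (\<alpha>, a, b) \<Rightarrow> in_poly_ring alg_nums {0..<d} \<alpha> \<and> algebraic b"
      using x0(2) in_poly_ring_psubst[of alg_nums "{0..<d}" \<alpha>0 theta] thloc by auto
  next
    fix i n and s :: "nat \<Rightarrow> int" assume i: "i < d" and n: "n0 \<le> n"
    let ?\<sigma> = "of_int \<circ> s :: nat \<Rightarrow> complex"
    have "cf_eval ?\<sigma> n (cf_subst theta (cf_of cl_t (theta_inv i)))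
        = peval (\<lambda>v. cf_eval (Th ?\<sigma>) n (cl_t v)) (theta_inv i)"
      by (simp add: cf_eval_subst cf_eval_cf_of Th_def)
    also have "\<dots> = peval ((T ^^ n) (Th ?\<sigma>)) (theta_inv i)"
    proof (rule peval_cong)
      fix v assume "v \<in> pvars (theta_inv i)"
      then have "v < d" using tiloc[OF i] by auto
      then show "cf_eval (Th ?\<sigma>) n (cl_t v) = (T ^^ n) (Th ?\<sigma>) v"
        using clt2[OF _ n] by (simp add: upd_pow_eval T_def)
    qed
    also have "\<dots> = Ti ((T ^^ n) (Th ?\<sigma>)) i" by (simp add: Ti_def Fv_def)
    also have "\<dots> = Ti (Th ((E ^^ n) ?\<sigma>)) i"
      using Fv_resp[OF locTi ind] i by (simp add: Ti_def)
    also have "\<dots> = (E ^^ n) ?\<sigma> i" by (rule inv[OF i])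
    also have "\<dots> = peval ?\<sigma> (upd_pow eta_s n i)" by (simp add: upd_pow_eval E_def)
    finally show "cf_eval ?\<sigma> n (cf_subst theta (cf_of cl_t (theta_inv i))) = peval ?\<sigma> (upd_pow eta_s n i)" .
  qed
qed

end
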